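(* Let $f\geq 1$ be an integer, let $\zeta\in\mathbf{C}$ with $\zeta^f=1$, and let $x\in\mathbf{C}$ with $|x|\geq 1-\frac{1}{2f}$. Set $x'=x-\frac{x^f-1}{fx^{f-1}}$. Then $|x'-\zeta|\leq f|x-\zeta|^2$. *)

theory Defs
  imports "HOL-Analysis.Analysis"
begin

end

theory Submission
  imports Defs
begin
lemma gs: "2 * (\<Sum>i<n. n - Suc i) \<le> n * (n::nat)"
proof -
  have "(\<Sum>i<n. n - Suc i) = (\<Sum>i<n. i)" by (rule sum.nat_diff_reindex)
  also have "\<dots> = \<Sum>{0..<n}" by (simp add: lessThan_atLeast0)
  also have "\<dots> = n * (n - 1) div 2" by (simp add: Sum_Ico_nat)
  finally show ?thesis by (cases n) auto
qed

lemma ident: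
  fixes x z :: complex and f :: nat
  assumes "z ^ f = 1" "f \<ge> 1"
  shows "of_nat f * x^(f-1) * (x - z) - (x^f - 1) =
     (x - z)^2 * (\<Sum>i<f. x^i * (\<Sum>j<f - Suc i. z^(f - Suc i - Suc j) * x^j))"
proof -
  have "x^f - 1 = x^f - z^f" using assms by simp
  also have "\<dots> = (x - z) * (\<Sum>i<f. z^(f - Suc i) * x^i)" by (rule power_diff_sumr2)
  finally have e1: "x^f - 1 = (x - z) * (\<Sum>i<f. z^(f - Suc i) * x^i)" .
  have e2: "of_nat f * x^(f-1) = (\<Sum>i<f. x^(f-1))" by simp
  have e3: "x^(f-1) - z^(f - Suc i) * x^i = x^i * ((x - z) * (\<Sum>j<f - Suc i. z^(f - Suc i - Suc j) * x^j))"
    if "i < f" for i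
  proof -
    have "x^(f-1) = x^i * x^(f - Suc i)" using that by (simp add: power_add[symmetric])
    hence "x^(f-1) - z^(f - Suc i) * x^i = x^i * (x^(f - Suc i) - z^(f - Suc i))" by (simp add: algebra_simps)
    also have "x^(f - Suc i) - z^(f - Suc i) = (x - z) * (\<Sum>j<f - Suc i. z^(f - Suc i - Suc j) * x^j)"
      by (rule power_diff_sumr2)
    finally show ?thesis .
  qed
  have "of_nat f * x^(f-1) * (x - z) - (x^f - 1) = (x - z) * (\<Sum>i<f. x^(f-1) - z^(f - Suc i) * x^i)"
    unfolding e1 e2 by (simp add: sum_subtractf sum_distrib_left sum_distrib_right algebra_simps)
  also have "\<dots> = (x - z) * (\<Sum>i<f. x^i * ((x - z) * (\<Sum>j<f - Suc i. z^(f - Suc i - Suc j) * x^j)))"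
    using e3 by simp
  also have "\<dots> = (x - z)^2 * (\<Sum>i<f. x^i * (\<Sum>j<f - Suc i. z^(f - Suc i - Suc j) * x^j))"
    by (simp add: sum_distrib_left power2_eq_square algebra_simps)
  finally show ?thesis .
qed

theorem lemma11:
  fixes f :: nat and \<zeta> x :: complex
  assumes "f \<ge> 1"
    and "\<zeta> ^ f = 1"
    and "norm x \<ge> 1 - 1 / (2 * real f)"
  shows "norm ((x - (x ^ f - 1) / (of_nat f * x ^ (f - 1))) - \<zeta>) \<le> real f * (norm (x - \<zeta>))^2"
proof -
  define r where "r = norm x"
  define Q where "Q = (\<Sum>i<f. x^i * (\<Sum>j<f - Suc i. \<zeta>^(f - Suc i - Suc j) * x^j))"
  have fpos: "real f \<ge> 1" using assms(1) by simp
  have "1 / (2 * real f) \<le> 1/2" using fpos by (simp add: field_simps)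
  hence rhalf: "r \<ge> 1/2" using assms(3) r_def by linarith
  have x0: "x \<noteq> 0" using rhalf r_def by auto
  have nz: "norm \<zeta> = 1"
  proof -
    have "norm (\<zeta> ^ f) = 1" using assms(2) by simp
    hence "norm \<zeta> ^ f = 1 ^ f" by (simp only: norm_power power_one)
    moreover have "0 < f" using assms(1) by simp
    ultimately show ?thesis using power_eq_imp_eq_base[of "norm \<zeta>" f 1] by simp
  qed
  have pow: "r^k \<le> 2 * r^(f-1)" if "k \<le> f - 1" for k
  proof (cases "r \<ge> 1")
    case True
    hence "r^k \<le> r^(f-1)" using that by (simp add: power_increasing)
    moreover have "r^(f-1) \<ge> 0" using rhalf by simp
    ultimately show ?thesis by linarith
  next
    case False
    hence "r^k \<le> 1" using rhalf by (simp add: power_le_one)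
    moreover have "r^(f-1) \<ge> 1/2"
    proof -
      have "-1 \<le> r - 1" using rhalf by simp
      from Bernoulli_inequality[OF this, of "f-1"]
      have "1 + real (f-1) * (r - 1) \<le> r^(f-1)" by simp
      moreover have "real (f-1) * (1 - r) \<le> 1/2"
      proof -
        have "1 - r \<le> 1 / (2 * real f)" using assms(3) r_def by linarith
        hence "real (f-1) * (1 - r) \<le> real f * (1 / (2 * real f))"
          using False by (intro mult_mono) auto
        also have "\<dots> = 1/2" using fpos by simp
        finally show ?thesis .
      qed
      ultimately show ?thesis by (simp add: algebra_simps)
    qed
    ultimately show ?thesis by linarith
  qed
  have Qb: "norm Q \<le> real f * real f * r^(f-1)"
  proof -
    have "norm Q \<le> (\<Sum>i<f. norm (x^i * (\<Sum>j<f - Suc i. \<zeta>^(f - Suc i - Suc j) * x^j)))"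
      unfolding Q_def by (rule norm_sum)
    also have "\<dots> \<le> (\<Sum>i<f. (\<Sum>j<f - Suc i. 2 * r^(f-1)))"
    proof (rule sum_mono)
      fix i assume i: "i \<in> {..<f}"
      have "norm (x^i * (\<Sum>j<f - Suc i. \<zeta>^(f - Suc i - Suc j) * x^j)) = r^i * norm (\<Sum>j<f - Suc i. \<zeta>^(f - Suc i - Suc j) * x^j)"
        by (simp add: norm_mult norm_power r_def)
      also have "\<dots> \<le> r^i * (\<Sum>j<f - Suc i. norm (\<zeta>^(f - Suc i - Suc j) * x^j))"
        using rhalf by (intro mult_left_mono norm_sum) auto
      also have "\<dots> = (\<Sum>j<f - Suc i. r^(i + j))"
        by (simp add: sum_distrib_left norm_mult norm_power nz r_def power_add)
      also have "\<dots> \<le> (\<Sum>j<f - Suc i. 2 * r^(f-1))"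
        by (intro sum_mono pow) auto
      finally show "norm (x^i * (\<Sum>j<f - Suc i. \<zeta>^(f - Suc i - Suc j) * x^j)) \<le> (\<Sum>j<f - Suc i. 2 * r^(f-1))" .
    qed
    also have "\<dots> = r^(f-1) * real (2 * (\<Sum>i<f. f - Suc i))"
      by (simp add: sum_distrib_left algebra_simps)
    also have "\<dots> \<le> r^(f-1) * real (f * f)"
    proof (rule mult_left_mono)
      show "real (2 * (\<Sum>i<f. f - Suc i)) \<le> real (f * f)" using gs[of f] by (simp only: of_nat_le_iff)
      show "0 \<le> r^(f-1)" using rhalf by simp
    qed
    finally show ?thesis by (simp add: algebra_simps)
  qed
  have den0: "of_nat f * x^(f-1) \<noteq> 0" using x0 assms(1) by simp
  have "(x - (x ^ f - 1) / (of_nat f * x ^ (f - 1))) - \<zeta>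
      = (of_nat f * x^(f-1) * (x - \<zeta>) - (x^f - 1)) / (of_nat f * x^(f-1))"
    using den0 by (simp add: field_simps)
  also have "\<dots> = (x - \<zeta>)^2 * Q / (of_nat f * x^(f-1))"
    unfolding Q_def using ident[OF assms(2,1)] by simp
  finally have eq: "(x - (x ^ f - 1) / (of_nat f * x ^ (f - 1))) - \<zeta> = (x - \<zeta>)^2 * Q / (of_nat f * x^(f-1))" .
  have rp: "r^(f-1) > 0" using rhalf by simp
  have "norm ((x - \<zeta>)^2 * Q / (of_nat f * x^(f-1))) = norm (x - \<zeta>)^2 * norm Q / (real f * r^(f-1))"
    by (simp add: norm_mult norm_divide norm_power r_def)
  also have "\<dots> \<le> norm (x - \<zeta>)^2 * (real f * real f * r^(f-1)) / (real f * r^(f-1))"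
    using Qb rp fpos by (intro divide_right_mono mult_left_mono) auto
  also have "\<dots> = real f * norm (x - \<zeta>)^2" using rp fpos rhalf by (simp add: field_simps)
  finally show ?thesis using eq by simp
qed
end
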